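(* Let $M$ be a paving matroid of rank $r \ge 3$, let $S = \{s_1,\dots,s_r\}$ be a basis of $M$, and let $e_1 e_2\cdots e_m$ (with $m \ge r$) be a cyclic ordering of $M\backslash S$, i.e., any $r$ cyclically consecutive elements form a basis of $M$. Suppose that for every $i \in \{1,\dots,m\}$ and every permutation $\pi$ of $\{1,\dots,r\}$, the sequence $e_1\cdots e_i\, s_{\pi(1)}\cdots s_{\pi(r)}\, e_{i+1}\cdots e_m$ is not a cyclic ordering of $M$. Fix $j \in \{1,\dots,m\}$, let $x_t = e_{j-t}$ and $y_t = e_{j+t-1}$ for $t = 1,\dots,r-1$ (indices taken modulo $m$ in $\{1,\dots,m\}$). Let $\mathcal{H}_1$ be the set of all $C \cap S$ where $C$ is a circuit of $M$ with $|C| = r$ and $\{x_1,\dots,x_i\} \subset C \subseteq \{x_1,\dots,x_i\} \cup S$ for some $i \in \{1,\dots,r-1\}$, and let $\mathcal{H}_2$ be the set of all $C\cap S$ where $C$ is a circuit with $|C|=r$ and $\{y_1,\dots,y_i\} \subset C \subseteq \{y_1,\dots,y_i\}\cup S$ for some $i\in\{1,\dots,r-1\}$. Then $(\mathcal{H}_1,\mathcal{H}_2)$ is an $S$-pair which is order consistent with respect to $S$.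
   Context: A matroid $M$ of rank $r$ is a paving matroid if every circuit has at least $r$ elements. Let $S$ be a finite nonempty set and $\mathcal{S}_1, \mathcal{S}_2 \subseteq 2^S$. The pair $(\mathcal{S}_1,\mathcal{S}_2)$ is an $S$-pair if: (S1) for $i=1,2$, if $A,B \in \mathcal{S}_i$ with $B \subset A$ and $|A| = |B|+1$, then every $|B|$-element subset of $A$ lies in $\mathcal{S}_i$; (S2) for $i=1,2$, if $A,B \in \mathcal{S}_i$ with $|A|=|B|$ and $|A\cap B| = |A|-1$, then $A\cup B \in \mathcal{S}_i$; (S3) for $i=1,2$, not every singleton $\{s\}$, $s\in S$, lies in $\mathcal{S}_i$, and $S \notin \mathcal{S}_i$; (S4) for $k = 1,\dots,|S|-1$ and $x\in S$, if every $k$-element subset of $S - x$ lies in $\mathcal{S}_1$, then not every $(|S|-k)$-element subset of $S-x$ lies in $\mathcal{S}_2$. The pair $(\mathcal{S}_1,\mathcal{S}_2)$ is order consistent with respect to $S$ (where $|S|=n$) if for every ordering $s_1 s_2\cdots s_n$ of $S$ there exists $i\in\{1,\dots,n\}$ such that $\{s_1,\dots,s_i\} \in \mathcal{S}_1$ or $\{s_i,\dots,s_n\} \in \mathcal{S}_2$. *)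

theory Defs
  imports Main
begin

definition matroid :: "'a set \<Rightarrow> ('a set \<Rightarrow> bool) \<Rightarrow> bool" where
  "matroid E indep \<longleftrightarrow> finite E
     \<and> (\<forall>X. indep X \<longrightarrow> X \<subseteq> E)
     \<and> indep {}
     \<and> (\<forall>X Y. indep X \<longrightarrow> Y \<subseteq> X \<longrightarrow> indep Y)
     \<and> (\<forall>X Y. indep X \<longrightarrow> indep Y \<longrightarrow> card X < card Y \<longrightarrow>
            (\<exists>y\<in>Y - X. indep (insert y X)))"

definition basis :: "'a set \<Rightarrow> ('a set \<Rightarrow> bool) \<Rightarrow> 'a set \<Rightarrow> bool" where
  "basis E indep B \<longleftrightarrow> B \<subseteq> E \<and> indep B \<and> (\<forall>X. X \<subseteq> E \<longrightarrow> indep X \<longrightarrow> B \<subseteq> X \<longrightarrow> X = B)"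

definition circuit :: "'a set \<Rightarrow> ('a set \<Rightarrow> bool) \<Rightarrow> 'a set \<Rightarrow> bool" where
  "circuit E indep C \<longleftrightarrow> C \<subseteq> E \<and> \<not> indep C \<and> (\<forall>D. D \<subset> C \<longrightarrow> indep D)"

definition mrank :: "'a set \<Rightarrow> ('a set \<Rightarrow> bool) \<Rightarrow> nat" where
  "mrank E indep = Max {card X | X. X \<subseteq> E \<and> indep X}"

definition paving :: "'a set \<Rightarrow> ('a set \<Rightarrow> bool) \<Rightarrow> bool" where
  "paving E indep \<longleftrightarrow> matroid E indep \<and>
     (\<forall>C. circuit E indep C \<longrightarrow> card C \<ge> mrank E indep)"

definition cyc_window :: "'a list \<Rightarrow> nat \<Rightarrow> nat \<Rightarrow> 'a set" where
  "cyc_window xs r k = {xs ! ((k + t) mod length xs) | t. t < r}"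

definition cyclic_arrangement :: "'a set \<Rightarrow> ('a set \<Rightarrow> bool) \<Rightarrow> 'a list \<Rightarrow> bool" where
  "cyclic_arrangement E indep xs \<longleftrightarrow> distinct xs \<and>
     (\<forall>k < length xs. basis E indep (cyc_window xs (mrank E indep) k))"

definition cyclic_ordering :: "'a set \<Rightarrow> ('a set \<Rightarrow> bool) \<Rightarrow> 'a list \<Rightarrow> bool" where
  "cyclic_ordering E indep xs \<longleftrightarrow> set xs = E \<and> cyclic_arrangement E indep xs"

text \<open>1-based cyclic indexing: e_k for integer k, index taken modulo m in {1..m}.\<close>
definition cyc_nth :: "'a list \<Rightarrow> int \<Rightarrow> 'a" where
  "cyc_nth xs k = xs ! nat ((k - 1) mod int (length xs))"

definition S_pair :: "'a set \<Rightarrow> 'a set set \<Rightarrow> 'a set set \<Rightarrow> bool" where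
  "S_pair S S1 S2 \<longleftrightarrow> finite S \<and> S \<noteq> {} \<and> S1 \<subseteq> Pow S \<and> S2 \<subseteq> Pow S \<and>
    (\<forall>F\<in>{S1, S2}.
       (\<forall>A\<in>F. \<forall>B\<in>F. B \<subset> A \<and> card A = card B + 1 \<longrightarrow>
            (\<forall>D. D \<subseteq> A \<and> card D = card B \<longrightarrow> D \<in> F))
     \<and> (\<forall>A\<in>F. \<forall>B\<in>F. card A = card B \<and> card (A \<inter> B) = card A - 1 \<longrightarrow> A \<union> B \<in> F)
     \<and> \<not> (\<forall>s\<in>S. {s} \<in> F) \<and> S \<notin> F)
   \<and> (\<forall>k \<in> {1..card S - 1}. \<forall>x\<in>S.
       (\<forall>D. D \<subseteq> S - {x} \<and> card D = k \<longrightarrow> D \<in> S1) \<longrightarrow>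
       \<not> (\<forall>D. D \<subseteq> S - {x} \<and> card D = card S - k \<longrightarrow> D \<in> S2))"

definition order_consistent :: "'a set \<Rightarrow> 'a set set \<Rightarrow> 'a set set \<Rightarrow> bool" where
  "order_consistent S S1 S2 \<longleftrightarrow>
    (\<forall>ps. distinct ps \<and> set ps = S \<longrightarrow>
       (\<exists>i\<in>{1..length ps}. set (take i ps) \<in> S1 \<or> set (drop (i - 1) ps) \<in> S2))"

end

theory Submission
  imports Defs
begin


lemma mD: assumes "matroid E indep"
  shows "finite E" "\<And>X. indep X \<Longrightarrow> X \<subseteq> E" "indep {}"
    "\<And>X Y. indep X \<Longrightarrow> Y \<subseteq> X \<Longrightarrow> indep Y"
    "\<And>X Y. indep X \<Longrightarrow> indep Y \<Longrightarrow> card X < card Y \<Longrightarrow> \<exists>y\<in>Y - X. indep (insert y X)"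
proof -
  note h = assms[unfolded matroid_def]
  have h1: "finite E" using h by (elim conjE)
  have h2: "\<forall>X. indep X \<longrightarrow> X \<subseteq> E" using h by (elim conjE)
  have h3: "indep {}" using h by (elim conjE)
  have h4: "\<forall>X Y. indep X \<longrightarrow> Y \<subseteq> X \<longrightarrow> indep Y" using h by (elim conjE)
  have h5: "\<forall>X Y. indep X \<longrightarrow> indep Y \<longrightarrow> card X < card Y \<longrightarrow> (\<exists>y\<in>Y - X. indep (insert y X))"
    using h by (elim conjE)
  show "finite E" by (rule h1)
  show "\<And>X. indep X \<Longrightarrow> X \<subseteq> E" using h2 by blast
  show "indep {}" by (rule h3)
  show "\<And>X Y. indep X \<Longrightarrow> Y \<subseteq> X \<Longrightarrow> indep Y" using h4 by blast
  show "\<And>X Y. indep X \<Longrightarrow> indep Y \<Longrightarrow> card X < card Y \<Longrightarrow> \<exists>y\<in>Y - X. indep (insert y X)"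
    using h5 by blast
qed
lemma m_finite: "matroid E indep \<Longrightarrow> finite E" by (rule mD(1))
lemma m_subE: "matroid E indep \<Longrightarrow> indep X \<Longrightarrow> X \<subseteq> E" by (rule mD(2))
lemma m_sub: "matroid E indep \<Longrightarrow> indep X \<Longrightarrow> Y \<subseteq> X \<Longrightarrow> indep Y" by (rule mD(4))
lemma m_aug: "matroid E indep \<Longrightarrow> indep X \<Longrightarrow> indep Y \<Longrightarrow> card X < card Y \<Longrightarrow> \<exists>y\<in>Y-X. indep (insert y X)"
  by (rule mD(5))
lemma m_fin: "matroid E indep \<Longrightarrow> indep X \<Longrightarrow> finite X"
  by (rule finite_subset[OF m_subE m_finite])



lemma mrank_ge: assumes "matroid E indep" "X \<subseteq> E" "indep X" shows "card X \<le> mrank E indep"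
proof -
  have "{card X | X. X \<subseteq> E \<and> indep X} \<subseteq> card ` Pow E" by auto
  from this have "finite {card X | X. X \<subseteq> E \<and> indep X}"
    by (rule finite_subset[OF _ finite_imageI[OF iffD2[OF finite_Pow_iff m_finite[OF assms(1)]]]])
  then show ?thesis unfolding mrank_def using assms by (auto intro!: Max_ge)
qed




lemma dep_circuit: assumes "matroid E indep" "X \<subseteq> E" "\<not> indep X"
  shows "\<exists>C\<subseteq>X. circuit E indep C"
  using assms(2,3)
proof (induction "card X" arbitrary: X rule: less_induct)
  case less
  show ?case
  proof (cases "\<forall>D. D \<subset> X \<longrightarrow> indep D")
    case True then show ?thesis using less by (auto simp: circuit_def)
  next
    case False
    then obtain D where D: "D \<subset> X" "\<not> indep D" by blast
    have "finite X" using finite_subset[OF less(2) m_finite[OF assms(1)]] .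
    then have "card D < card X" using D psubset_card_mono by blast
    then show ?thesis using less(1)[of D] D less(2) by blast
  qed
qed




lemma paving_small: assumes "paving E indep" "X \<subseteq> E" "card X < mrank E indep" shows "indep X"
proof (rule ccontr)
  assume "\<not> indep X"
  have m: "matroid E indep" using assms(1) paving_def by blast
  obtain C where C: "C \<subseteq> X" "circuit E indep C" using dep_circuit[OF m assms(2)] \<open>\<not> indep X\<close> by blast
  have "finite X" using finite_subset[OF assms(2) m_finite[OF m]] .
  then have "card C \<le> card X" using C card_mono by blast
  moreover have "card C \<ge> mrank E indep" using assms(1) C unfolding paving_def by blast
  ultimately show False using assms(3) by simp
qed




lemma paving_circ: assumes "paving E indep" "X \<subseteq> E" "card X = mrank E indep" "\<not> indep X"
  shows "circuit E indep X"
proof -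
  have m: "matroid E indep" using assms(1) paving_def by blast
  have "finite X" using finite_subset[OF assms(2) m_finite[OF m]] .
  have "indep D" if "D \<subset> X" for D
    using paving_small[OF assms(1), of D] that assms(2,3) psubset_card_mono[OF \<open>finite X\<close> that] by auto
  then show ?thesis using assms unfolding circuit_def by blast
qed




lemma indep_basis: assumes "matroid E indep" "X \<subseteq> E" "indep X" "card X = mrank E indep"
  shows "basis E indep X"
proof -
  have "Y = X" if "Y \<subseteq> E" "indep Y" "X \<subseteq> Y" for Y
  proof -
    have "finite Y" using that m_fin[OF assms(1)] by blast
    moreover have "card Y \<le> card X" using mrank_ge[OF assms(1) that(1,2)] assms(4) by simp
    ultimately show ?thesis using that(3) card_seteq by blast
  qed
  then show ?thesis using assms unfolding basis_def by blast
qed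




lemma augL: assumes "matroid E indep" "indep Z" "\<not> indep (insert a Z)" "\<not> indep (insert b Z)"
  "a \<notin> Z" "b \<notin> Z" "a \<noteq> b" "t \<in> Z"
  shows "\<not> indep (insert a (insert b (Z - {t})))"
proof
  assume h: "indep (insert a (insert b (Z - {t})))"
  have f: "finite Z" using m_fin[OF assms(1,2)] .
  have "card (insert a (insert b (Z - {t}))) = card Z + 1"
    using assms(5-8) f by (simp add: card_Diff_singleton) (metis One_nat_def Suc_pred card_gt_0_iff emptyE)
  then obtain u where "u \<in> insert a (insert b (Z - {t})) - Z" "indep (insert u Z)"
    using m_aug[OF assms(1,2) h] by auto
  then show False using assms(3,4) by auto
qed




lemma aug_iter: assumes "matroid E indep" "indep X" "indep Y"
  shows "card X + d \<le> card Y \<Longrightarrow> \<exists>D\<subseteq>Y-X. card D = d \<and> indep (X \<union> D)"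
proof (induction d)
  case 0 show ?case using assms(2) by (intro exI[of _ "{}"]) simp
next
  case (Suc d)
  then obtain D where D: "D \<subseteq> Y - X" "card D = d" "indep (X \<union> D)" by auto
  have fX: "finite X" using m_fin[OF assms(1,2)] .
  have fD: "finite D" using D(3) m_fin[OF assms(1)] by blast
  have "card (X \<union> D) = card X + d" using D fX fD by (subst card_Un_disjoint) auto
  then obtain u where u: "u \<in> Y - (X \<union> D)" "indep (insert u (X \<union> D))"
    using m_aug[OF assms(1) D(3) assms(3)] Suc.prems by auto
  show ?case using u D fD by (intro exI[of _ "insert u D"]) auto
qed





definition Hset :: "'a set \<Rightarrow> ('a set \<Rightarrow> bool) \<Rightarrow> 'a set \<Rightarrow> nat \<Rightarrow> (nat \<Rightarrow> 'a) \<Rightarrow> 'a set set" where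
 "Hset E indep S r f = {C \<inter> S | C. circuit E indep C \<and> card C = r \<and>
      (\<exists>i\<in>{1..r-1}. f ` {1..i} \<subset> C \<and> C \<subseteq> f ` {1..i} \<union> S)}"

lemma circD: "circuit E indep C \<Longrightarrow> \<not> indep C" "circuit E indep C \<Longrightarrow> C \<subseteq> E"
  unfolding circuit_def by simp_all

lemma card_fimg: assumes "inj_on f {1..r-1}" "i \<le> r - 1" shows "card (f ` {1..i}) = i"
proof -
  have "{1..i} \<subseteq> {1..r-1}" using assms(2) by auto
  then have "inj_on f {1..i}" using inj_on_subset[OF assms(1)] by blast
  then show ?thesis by (simp add: card_image)
qed

lemma Hset_char:
  assumes pav: "paving E indep" and rk: "mrank E indep = r" and SE: "S \<subseteq> E"
    and inj: "inj_on f {1..r-1}" and fE: "f ` {1..r-1} \<subseteq> E - S"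
  shows "D \<in> Hset E indep S r f \<longleftrightarrow> D \<subseteq> S \<and> 1 \<le> card D \<and> card D \<le> r-1 \<and>
            \<not> indep (f ` {1..r - card D} \<union> D)"
proof -
  have m: "matroid E indep" using pav paving_def by blast
  have fS: "finite S" using finite_subset[OF SE m_finite[OF m]] .
  have sub: "f ` {1..i} \<subseteq> f ` {1..r-1}" if "i \<le> r - 1" for i using that by auto
  show ?thesis
  proof
    assume "D \<in> Hset E indep S r f"
    then obtain C i where C: "D = C \<inter> S" "circuit E indep C" "card C = r" "i \<in> {1..r-1}"
       "f ` {1..i} \<subset> C" "C \<subseteq> f ` {1..i} \<union> S" unfolding Hset_def by blast
    have ci: "card (f ` {1..i}) = i" using card_fimg[OF inj] C(4) by auto
    have disj: "f ` {1..i} \<inter> D = {}" using sub[of i] C(4) fE C(1) by auto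
    have CeqU: "C = f ` {1..i} \<union> D" using C by auto
    have fD: "finite D" using C(1) fS by simp
    have "card C = card (f ` {1..i}) + card D" unfolding CeqU using disj fD
      by (intro card_Un_disjoint) auto
    then have "card C = i + card D" using ci by simp
    then have cD: "card D = r - i" using C(3) by simp
    have "r - card D = i" using cD C(4) C(3) \<open>card C = i + card D\<close> by simp
    moreover have "\<not> indep C" using C(2) by (rule circD)
    ultimately have "\<not> indep (f ` {1..r - card D} \<union> D)" using CeqU by simp
    moreover have "D \<subseteq> S" using C(1) by blast
    moreover have "1 \<le> card D \<and> card D \<le> r-1" using C(4) cD by auto
    ultimately show "D \<subseteq> S \<and> 1 \<le> card D \<and> card D \<le> r-1 \<and> \<not> indep (f ` {1..r - card D} \<union> D)"
      by blast
  next
    assume h: "D \<subseteq> S \<and> 1 \<le> card D \<and> card D \<le> r-1 \<and> \<not> indep (f ` {1..r - card D} \<union> D)"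
    define i where "i = r - card D"
    have i: "i \<in> {1..r-1}" using h unfolding i_def by auto
    have ci: "card (f ` {1..i}) = i" using card_fimg[OF inj] i by auto
    have disj: "f ` {1..i} \<inter> D = {}" using sub[of i] i fE h by auto
    have fD: "finite D" using h fS finite_subset by auto
    define C where "C = f ` {1..i} \<union> D"
    have "card C = card (f ` {1..i}) + card D" unfolding C_def using disj fD
      by (intro card_Un_disjoint) auto
    moreover have "card D \<le> r" using h by linarith
    ultimately have cC: "card C = r" using ci h i_def by simp
    have CE: "C \<subseteq> E" unfolding C_def using sub[of i] i fE h SE by auto
    have circ: "circuit E indep C" using paving_circ[OF pav CE] cC rk h unfolding C_def i_def by simp
    have "D = C \<inter> S" unfolding C_def using disj sub[of i] i fE h by auto
    moreover have "D \<noteq> {}" using h by auto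
    then have "f ` {1..i} \<subset> C" unfolding C_def using disj by blast
    moreover have "C \<subseteq> f ` {1..i} \<union> S" unfolding C_def using h by auto
    ultimately show "D \<in> Hset E indep S r f" unfolding Hset_def using circ cC i by blast
  qed
qed




context
  fixes E :: "'a set" and indep S r and f :: "nat \<Rightarrow> 'a"
  assumes pav: "paving E indep" and rk: "mrank E indep = r" and r3: "r \<ge> 3"
    and bS: "basis E indep S" and cS: "card S = r"
    and inj: "inj_on f {1..r-1}" and fE: "f ` {1..r-1} \<subseteq> E - S"
begin

lemma mat: "matroid E indep" using pav unfolding paving_def by (rule conjunct1)
lemma SE: "S \<subseteq> E" using bS unfolding basis_def by (rule conjunct1)
lemma iS: "indep S" using bS unfolding basis_def by (elim conjE)
lemma fS: "finite S" using finite_subset[OF SE m_finite[OF mat]] .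

lemma char: "D \<in> Hset E indep S r f \<longleftrightarrow> D \<subseteq> S \<and> 1 \<le> card D \<and> card D \<le> r-1 \<and>
            \<not> indep (f ` {1..r - card D} \<union> D)"
  by (rule Hset_char[OF pav rk SE inj fE])

lemma fnS: "i \<in> {1..r-1} \<Longrightarrow> f i \<notin> S" using fE unfolding image_subset_iff by blast
lemma fInE: "i \<in> {1..r-1} \<Longrightarrow> f i \<in> E" using fE unfolding image_subset_iff by blast
lemma fimgS: "i \<le> r - 1 \<Longrightarrow> f ` {1..i} \<inter> S = {}" using fE by fastforce
lemma fimgE: "i \<le> r - 1 \<Longrightarrow> f ` {1..i} \<subseteq> E" using fE by fastforce
lemma fnotin: "i + 1 \<le> r - 1 \<Longrightarrow> f (i+1) \<notin> f ` {1..i}"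
proof
  assume "i + 1 \<le> r - 1" "f (i+1) \<in> f ` {1..i}"
  then obtain u where "u \<in> {1..i}" "f (i+1) = f u" by auto
  moreover have "u \<in> {1..r-1}" "i+1 \<in> {1..r-1}" using \<open>u \<in> {1..i}\<close> \<open>i + 1 \<le> r - 1\<close> by auto
  ultimately show False using inj inj_on_eq_iff by fastforce
qed
lemma fimg_Suc: "f ` {1..i+1} = insert (f (i+1)) (f ` {1..i})"
proof -
  have "{1..i+1} = insert (i+1) {1..i}" by auto
  then show ?thesis by simp
qed

lemma small_indep: "X \<subseteq> E \<Longrightarrow> card X < r \<Longrightarrow> indep X"
  using paving_small[OF pav] rk by simp

lemma H_S1:
  assumes A: "A \<in> Hset E indep S r f" and B: "B \<in> Hset E indep S r f" and BA: "B \<subset> A"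
    and cA: "card A = card B + 1" and DA: "D \<subseteq> A" and cD: "card D = card B"
  shows "D \<in> Hset E indep S r f"
proof -
  have AS: "A \<subseteq> S" and cA1: "1 \<le> card A" "card A \<le> r - 1" and dA: "\<not> indep (f ` {1..r - card A} \<union> A)"
    using A char by auto
  have BS: "B \<subseteq> S" and cB1: "1 \<le> card B" "card B \<le> r - 1" and dB: "\<not> indep (f ` {1..r - card B} \<union> B)"
    using B char by auto
  have fA: "finite A" using finite_subset[OF AS fS] .
  have "card (A - B) = 1" using cA BA fA by (simp add: card_Diff_subset finite_subset[OF _ fA])
  then obtain s where s: "A - B = {s}" by (rule card_1_singletonE)
  have As: "A = insert s B" "s \<notin> B" using s BA by auto
  have "card (A - D) = 1" using cA cD DA fA by (simp add: card_Diff_subset finite_subset[OF _ fA])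
  then obtain t where t: "A - D = {t}" by (rule card_1_singletonE)
  have Dt: "D = A - {t}" "t \<in> A" using t DA by auto
  show ?thesis
  proof (cases "t = s")
    case True
    then have "D = B" using Dt As by auto
    then show ?thesis using B by simp
  next
    case False
    then have tB: "t \<in> B" using Dt As by auto
    define i where "i = r - card A"
    have i1: "1 \<le> i" "i + 1 \<le> r - 1" using cA1 cB1 cA unfolding i_def by auto
    have riB: "r - card B = i + 1" using cA cA1 unfolding i_def by auto
    define Z where "Z = f ` {1..i} \<union> B"
    have fB: "finite B" using finite_subset[OF BS fS] .
    have disj: "f ` {1..i} \<inter> B = {}" using fimgS[of i] i1 BS by auto
    have "card Z = card (f ` {1..i}) + card B" unfolding Z_def using disj fB
      by (intro card_Un_disjoint) auto
    also have "\<dots> = i + card B" using card_fimg[OF inj, of i] i1 by simp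
    finally have cZ: "card Z < r" using riB i1 by simp
    have ZE: "Z \<subseteq> E" unfolding Z_def using fimgE[of i] i1 BS SE by auto
    have iZ: "indep Z" using small_indep[OF ZE cZ] .
    have d1: "\<not> indep (insert s Z)" using dA unfolding Z_def i_def As(1) by (simp add: insert_commute)
    have d2: "\<not> indep (insert (f (i+1)) Z)" using dB unfolding Z_def riB fimg_Suc by simp
    have sZ: "s \<notin> Z" using As AS fimgS[of i] i1 unfolding Z_def by auto
    have fi1: "i + 1 \<in> {1..r-1}" using i1 by auto
    have fZ: "f (i+1) \<notin> Z" using fnotin[OF i1(2)] fnS[OF fi1] BS unfolding Z_def by auto
    have sf: "s \<noteq> f (i+1)" using fnS[OF fi1] As AS by auto
    have tZ: "t \<in> Z" using tB unfolding Z_def by auto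
    have "\<not> indep (insert s (insert (f (i+1)) (Z - {t})))"
      by (rule augL[OF mat iZ d1 d2 sZ fZ sf tZ])
    moreover have "insert s (insert (f (i+1)) (Z - {t})) = f ` {1..r - card D} \<union> D"
    proof -
      have "t \<notin> f ` {1..i}" using tB disj by auto
      then have "Z - {t} = f ` {1..i} \<union> (B - {t})" unfolding Z_def by auto
      moreover have "D = insert s (B - {t})" using Dt As False by auto
      ultimately show ?thesis unfolding cD riB fimg_Suc by auto
    qed
    ultimately have "\<not> indep (f ` {1..r - card D} \<union> D)" by simp
    moreover have "D \<subseteq> S" using DA AS by auto
    ultimately show ?thesis using char cD cB1 by auto
  qed
qed


lemma H_S2:
  assumes A: "A \<in> Hset E indep S r f" and B: "B \<in> Hset E indep S r f"
    and cAB: "card A = card B" and cI: "card (A \<inter> B) = card A - 1"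
  shows "A \<union> B \<in> Hset E indep S r f"
proof -
  have AS: "A \<subseteq> S" and cA1: "1 \<le> card A" "card A \<le> r - 1" and dA: "\<not> indep (f ` {1..r - card A} \<union> A)"
    using A char by auto
  have BS: "B \<subseteq> S" and dB: "\<not> indep (f ` {1..r - card B} \<union> B)"
    using B char by auto
  have fA: "finite A" using finite_subset[OF AS fS] .
  have fB: "finite B" using finite_subset[OF BS fS] .
  define W where "W = A \<inter> B"
  have fW: "finite W" unfolding W_def using fA by simp
  have "card (A - W) = 1" using cI cA1 fA unfolding W_def
    by (simp add: card_Diff_subset finite_subset[OF _ fA])
  then obtain a where a: "A - W = {a}" by (rule card_1_singletonE)
  have "card (B - W) = 1" using cI cA1 fB cAB unfolding W_def
    by (simp add: card_Diff_subset finite_subset[OF _ fB] Int_commute)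
  then obtain b where b: "B - W = {b}" by (rule card_1_singletonE)
  have Aa: "A = insert a W" "a \<notin> W" using a unfolding W_def by auto
  have Bb: "B = insert b W" "b \<notin> W" using b unfolding W_def by auto
  have ab: "a \<noteq> b" using Aa Bb unfolding W_def by auto
  have aS: "a \<in> S" "b \<in> S" using Aa Bb AS BS by auto
  have cW: "card W = card A - 1" using cI W_def by simp
  have WS: "W \<subseteq> S" using AS unfolding W_def by auto
  have AB: "A \<union> B = insert a (insert b W)" using Aa Bb by auto
  have cAB2: "card (A \<union> B) = card A + 1" using AB Aa Bb ab fW cA1 by simp
  show ?thesis
  proof (cases "card A = r - 1")
    case True
    define Z where "Z = insert (f 1) W"
    have f1: "1 \<in> {1..r-1}" using r3 by auto
    have f1S: "f 1 \<notin> S" using fnS[OF f1] .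
    have "f 1 \<notin> W" using f1S WS by auto
    then have "card Z = card W + 1" unfolding Z_def using fW by simp
    then have cZ: "card Z < r" using cW True r3 by simp
    have ZE: "Z \<subseteq> E" unfolding Z_def using fInE[OF f1] WS SE by auto
    have iZ: "indep Z" using small_indep[OF ZE cZ] .
    have r1: "r - card A = 1" "r - card B = 1" using True cAB r3 by auto
    have "f ` {1..r - card A} \<union> A = insert a Z" unfolding r1 Z_def using Aa by auto
    then have d1: "\<not> indep (insert a Z)" using dA by simp
    have "f ` {1..r - card B} \<union> B = insert b Z" unfolding r1 Z_def using Bb by auto
    then have d2: "\<not> indep (insert b Z)" using dB by simp
    have aZ: "a \<notin> Z" "b \<notin> Z" using Aa Bb aS f1S unfolding Z_def by auto
    have tZ: "f 1 \<in> Z" unfolding Z_def by simp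
    have "\<not> indep (insert a (insert b (Z - {f 1})))"
      by (rule augL[OF mat iZ d1 d2 aZ ab tZ])
    moreover have "Z - {f 1} = W" unfolding Z_def using f1S WS by auto
    ultimately have "\<not> indep (A \<union> B)" using AB by simp
    moreover have "A \<union> B \<subseteq> S" using AS BS by auto
    ultimately have False using iS m_sub[OF mat] by blast
    then show ?thesis ..
  next
    case False
    define i where "i = r - card A - 1"
    have i1: "1 \<le> i" "i + 1 \<le> r - 1" using False cA1 unfolding i_def by auto
    have ri: "r - card A = i + 1" "r - card B = i + 1" using i1 cAB unfolding i_def by auto
    define Z where "Z = f ` {1..i+1} \<union> W"
    have disj: "f ` {1..i+1} \<inter> W = {}" using fimgS[of "i+1"] i1 WS by auto
    have "card Z = card (f ` {1..i+1}) + card W" unfolding Z_def using disj fW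
      by (intro card_Un_disjoint) auto
    also have "\<dots> = i + 1 + card W" using card_fimg[OF inj, of "i+1"] i1 by simp
    finally have cZ: "card Z < r" using cW ri cA1 by simp
    have ZE: "Z \<subseteq> E" unfolding Z_def using fimgE[of "i+1"] i1 WS SE by auto
    have iZ: "indep Z" using small_indep[OF ZE cZ] .
    have "f ` {1..r - card A} \<union> A = insert a Z" unfolding ri Z_def using Aa by auto
    then have d1: "\<not> indep (insert a Z)" using dA by simp
    have "f ` {1..r - card B} \<union> B = insert b Z" unfolding ri Z_def using Bb by auto
    then have d2: "\<not> indep (insert b Z)" using dB by simp
    have aZ: "a \<notin> Z" "b \<notin> Z" using Aa Bb aS fimgS[of "i+1"] i1 unfolding Z_def by auto
    have tZ: "f (i+1) \<in> Z" unfolding Z_def by simp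
    have "\<not> indep (insert a (insert b (Z - {f (i+1)})))"
      by (rule augL[OF mat iZ d1 d2 aZ ab tZ])
    moreover have "Z - {f (i+1)} = f ` {1..i} \<union> W"
    proof -
      have fi1: "i + 1 \<in> {1..r-1}" using i1 by auto
      show ?thesis unfolding Z_def fimg_Suc using fnotin[OF i1(2)] fnS[OF fi1] WS by auto
    qed
    moreover have "r - card (A \<union> B) = i" using cAB2 ri by simp
    ultimately have "\<not> indep (f ` {1..r - card (A \<union> B)} \<union> (A \<union> B))" using AB
      by (simp add: insert_commute)
    moreover have "A \<union> B \<subseteq> S" using AS BS by auto
    moreover have "1 \<le> card (A \<union> B)" "card (A \<union> B) \<le> r - 1" using cAB2 ri i1 by auto
    ultimately show ?thesis using char by blast
  qed
qed

lemma H_S3: "\<not> (\<forall>s\<in>S. {s} \<in> Hset E indep S r f)" "S \<notin> Hset E indep S r f"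
proof -
  define X where "X = f ` {1..r-1}"
  have cX: "card X = r - 1" unfolding X_def using card_fimg[OF inj, of "r-1"] by simp
  have iX: "indep X" using small_indep[of X] fE cX r3 unfolding X_def by auto
  obtain s where s: "s \<in> S - X" "indep (insert s X)"
    using m_aug[OF mat iX iS] cX cS r3 by auto
  have "{s} \<notin> Hset E indep S r f"
  proof
    assume "{s} \<in> Hset E indep S r f"
    then have "\<not> indep (f ` {1..r - 1} \<union> {s})" using char by simp
    then show False using s X_def by simp
  qed
  then show "\<not> (\<forall>s\<in>S. {s} \<in> Hset E indep S r f)" using s by auto
  show "S \<notin> Hset E indep S r f" using char cS r3 by auto
qed

lemma H_sub: "Hset E indep S r f \<subseteq> Pow S" using char by auto

lemma H_dep: "D \<subseteq> S \<Longrightarrow> card D = k \<Longrightarrow> 1 \<le> k \<Longrightarrow> k \<le> r - 1 \<Longrightarrow> D \<in> Hset E indep S r f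
   \<Longrightarrow> \<not> indep (f ` {1..r - k} \<union> D)"
  using char by auto

end



lemma S4_abs:
  assumes pav: "paving E indep" and rk: "mrank E indep = r" and r3: "r \<ge> 3"
    and bS: "basis E indep S" and cS: "card S = r"
    and injf: "inj_on f {1..r-1}" and fE: "f ` {1..r-1} \<subseteq> E - S"
    and injg: "inj_on g {1..r-1}" and gE: "g ` {1..r-1} \<subseteq> E - S"
    and win: "\<And>k. k \<in> {1..r-1} \<Longrightarrow> indep (f ` {1..r-k} \<union> g ` {1..k}) \<and> card (f ` {1..r-k} \<union> g ` {1..k}) = r"
    and k: "k \<in> {1..card S - 1}" and x: "x \<in> S"
    and h1: "\<forall>D. D \<subseteq> S - {x} \<and> card D = k \<longrightarrow> D \<in> Hset E indep S r f"
    and h2: "\<forall>D. D \<subseteq> S - {x} \<and> card D = card S - k \<longrightarrow> D \<in> Hset E indep S r g"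
  shows False
proof -
  have mat: "matroid E indep" using pav unfolding paving_def by (rule conjunct1)
  have iS: "indep S" using bS unfolding basis_def by (elim conjE)
  have SE: "S \<subseteq> E" using bS unfolding basis_def by (rule conjunct1)
  have fS: "finite S" using finite_subset[OF SE m_finite[OF mat]] .
  define T where "T = S - {x}"
  have cT: "card T = r - 1" unfolding T_def using x fS cS by simp
  have iT: "indep T" unfolding T_def by (rule m_sub[OF mat iS]) auto
  have k1: "k \<in> {1..r-1}" using k cS by simp
  define X where "X = f ` {1..r-k}"
  define Y where "Y = g ` {1..k}"
  have iB: "indep (X \<union> Y)" and cB: "card (X \<union> Y) = r" using win[OF k1] unfolding X_def Y_def by auto
  obtain z where z: "z \<in> (X \<union> Y) - T" "indep (insert z T)"
    using m_aug[OF mat iT iB] cT cB r3 by auto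
  have fT: "finite T" using finite_subset[OF _ fS] T_def by auto
  have czT: "card (insert z T) = r" using z fT cT r3 by simp
  show False
  proof (cases "z \<in> X")
    case True
    have iX: "indep X" by (rule m_sub[OF mat iB]) auto
    have cX: "card X = r - k" unfolding X_def using card_fimg[OF injf, of "r-k"] k1 by auto
    obtain D where D: "D \<subseteq> insert z T - X" "card D = k" "indep (X \<union> D)"
    proof -
      have "card X + k \<le> card (insert z T)" using cX czT k1 by auto
      from aug_iter[OF mat iX z(2) this] show ?thesis using that by blast
    qed
    have DT: "D \<subseteq> T" using D(1) True by auto
    then have "D \<in> Hset E indep S r f" using h1 D(2) unfolding T_def by blast
    moreover have DS: "D \<subseteq> S" using DT unfolding T_def by auto
    moreover have "1 \<le> k" "k \<le> r - 1" using k1 by auto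
    ultimately have "\<not> indep (f ` {1..r - k} \<union> D)"
      using H_dep[OF pav rk r3 bS cS injf fE DS D(2)] by blast
    then show False using D(3) X_def by simp
  next
    case False
    then have zY: "z \<in> Y" using z by auto
    have iY: "indep Y" by (rule m_sub[OF mat iB]) auto
    have cY: "card Y = k" unfolding Y_def using card_fimg[OF injg, of k] k1 by auto
    obtain D where D: "D \<subseteq> insert z T - Y" "card D = r - k" "indep (Y \<union> D)"
    proof -
      have "card Y + (r - k) \<le> card (insert z T)" using cY czT k1 by auto
      from aug_iter[OF mat iY z(2) this] show ?thesis using that by blast
    qed
    have DT: "D \<subseteq> T" using D(1) zY by auto
    then have "D \<in> Hset E indep S r g" using h2 D(2) cS unfolding T_def by blast
    moreover have DS: "D \<subseteq> S" using DT unfolding T_def by auto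
    moreover have "1 \<le> r - k" "r - k \<le> r - 1" using k1 by auto
    ultimately have "\<not> indep (g ` {1..r - (r - k)} \<union> D)"
      using H_dep[OF pav rk r3 bS cS injg gE DS D(2)] by blast
    moreover have "r - (r - k) = k" using k1 by auto
    ultimately show False using D(3) Y_def by simp
  qed
qed




lemma cw_img: "cyc_window xs r k = (\<lambda>t. xs ! ((k+t) mod length xs)) ` {..<r}"
  unfolding cyc_window_def by auto

lemma mod_inj: assumes "(k+a) mod n = (k+b) mod (n::nat)" "a < n" "b < n" shows "a = b"
proof (cases "a \<le> b")
  case True
  obtain s where "k + b = k + a + n * s" using mod_eq_nat2E[OF assms(1)] True by auto
  then show ?thesis using assms(2,3) by (cases s) auto
next
  case False
  obtain s where "k + a = k + b + n * s" using mod_eq_nat1E[OF assms(1)] False by auto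
  then show ?thesis using assms(2,3) by (cases s) auto
qed

lemma card_cw: assumes "distinct xs" "r \<le> length xs" shows "card (cyc_window xs r k) = r"
proof -
  have "inj_on (\<lambda>t. xs ! ((k+t) mod length xs)) {..<r}"
  proof
    fix a b assume ab: "a \<in> {..<r}" "b \<in> {..<r}" "xs ! ((k+a) mod length xs) = xs ! ((k+b) mod length xs)"
    have lp: "0 < length xs" using ab assms by auto
    have "(k+a) mod length xs < length xs" "(k+b) mod length xs < length xs" using lp by auto
    then have "(k+a) mod length xs = (k+b) mod length xs"
      using ab(3) nth_eq_iff_index_eq[OF assms(1)] by blast
    then show "a = b" by (rule mod_inj) (use ab assms in auto)
  qed
  then show ?thesis unfolding cw_img by (simp add: card_image)
qed

lemma cw_rotate: assumes "xs \<noteq> []"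
  shows "cyc_window (rotate c xs) r k = cyc_window xs r ((k + c) mod length xs)"
proof -
  have "rotate c xs ! ((k+t) mod length xs) = xs ! (((k + c) mod length xs + t) mod length xs)" for t
  proof -
    have "rotate c xs ! ((k+t) mod length xs) = xs ! (((k+t) mod length xs + c) mod length xs)"
      using assms by (simp add: nth_rotate add.commute)
    also have "((k+t) mod length xs + c) mod length xs = ((k + c) mod length xs + t) mod length xs"
    proof -
      have "((k+t) mod length xs + c) mod length xs = (k+t+c) mod length xs" by (rule mod_add_left_eq)
      moreover have "((k+c) mod length xs + t) mod length xs = (k+c+t) mod length xs" by (rule mod_add_left_eq)
      moreover have "k+t+c = k+c+t" by simp
      ultimately show ?thesis by simp
    qed
    finally show ?thesis .
  qed
  then show ?thesis unfolding cw_img by simp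
qed

lemma arr_rotate: assumes "cyclic_arrangement E indep xs"
  shows "cyclic_arrangement E indep (rotate c xs)"
proof (cases "xs = []")
  case True then show ?thesis using assms by simp
next
  case False
  show ?thesis unfolding cyclic_arrangement_def
  proof (intro conjI allI impI)
    show "distinct (rotate c xs)" using assms unfolding cyclic_arrangement_def by simp
    fix k assume "k < length (rotate c xs)"
    have "(k + c) mod length xs < length xs" using False by simp
    then show "basis E indep (cyc_window (rotate c xs) (mrank E indep) k)"
      using assms unfolding cyclic_arrangement_def cw_rotate[OF False] by blast
  qed
qed

lemma ord_rotate: "cyclic_ordering E indep xs \<Longrightarrow> cyclic_ordering E indep (rotate c xs)"
  unfolding cyclic_ordering_def using arr_rotate by auto




lemma mod_high: "m \<le> (p::nat) \<Longrightarrow> p < m + m \<Longrightarrow> p mod m = p - m"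
  by (simp add: le_mod_geq)

lemma winQ: assumes "length Q = m" "r \<le> m" "1 \<le> k" "k \<le> r - 1"
  shows "cyc_window Q r (m - r + k) = (\<lambda>a. Q!(m-a)) ` {1..r-k} \<union> (\<lambda>t. Q!(t-1)) ` {1..k}"
proof (rule set_eqI, rule iffI)
  fix e assume "e \<in> cyc_window Q r (m - r + k)"
  then obtain t where t: "t < r" "e = Q ! ((m - r + k + t) mod m)" unfolding cw_img using assms(1) by auto
  show "e \<in> (\<lambda>a. Q!(m-a)) ` {1..r-k} \<union> (\<lambda>t. Q!(t-1)) ` {1..k}"
  proof (cases "t < r - k")
    case True
    have "(m - r + k + t) mod m = m - (r - k - t)" using True assms by simp
    moreover have "r - k - t \<in> {1..r-k}" using True by auto
    ultimately have "e \<in> (\<lambda>a. Q!(m-a)) ` {1..r-k}" using t by (intro rev_image_eqI[of "r - k - t"]) auto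
    then show ?thesis by blast
  next
    case False
    have "(m - r + k + t) mod m = (k + t - r + 1) - 1" using False assms t
      by (subst mod_high) auto
    moreover have "k + t - r + 1 \<in> {1..k}" using False t by auto
    ultimately have "e \<in> (\<lambda>t. Q!(t-1)) ` {1..k}" using t by (intro rev_image_eqI[of "k + t - r + 1"]) auto
    then show ?thesis by blast
  qed
next
  fix e assume "e \<in> (\<lambda>a. Q!(m-a)) ` {1..r-k} \<union> (\<lambda>t. Q!(t-1)) ` {1..k}"
  then consider a where "a \<in> {1..r-k}" "e = Q!(m-a)" | s where "s \<in> {1..k}" "e = Q!(s-1)" by auto
  then show "e \<in> cyc_window Q r (m - r + k)"
  proof cases
    case 1
    have "m - r + k + (r - k - a) = m - a" using 1 assms by auto
    moreover have "m - a < m" using 1 assms by auto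
    ultimately have "(m - r + k + (r - k - a)) mod m = m - a" by simp
    moreover have "r - k - a < r" using 1 by auto
    ultimately show ?thesis unfolding cw_img using 1 assms(1) by (auto intro!: rev_image_eqI[of "r - k - a"])
  next
    case 2
    have "(m - r + k + (r - k + s - 1)) mod m = s - 1" using 2 assms by (subst mod_high) auto
    moreover have "r - k + s - 1 < r" using 2 assms by auto
    ultimately show ?thesis unfolding cw_img using 2 assms(1) by (auto intro!: rev_image_eqI[of "r - k + s - 1"])
  qed
qed




context
  fixes ps Q :: "'a list" and r m :: nat
  assumes lps: "length ps = r" and lQ: "length Q = m" and rm: "r \<le> m"
begin

lemma lR: "length (ps @ Q) = r + m" using lps lQ by simp

lemma winR0: "cyc_window (ps @ Q) r 0 = set ps"
proof -
  have "\<And>t. t < r \<Longrightarrow> (ps @ Q) ! ((0 + t) mod length (ps @ Q)) = ps ! t"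
    using lR lps rm by (simp add: nth_append)
  then have "cyc_window (ps @ Q) r 0 = (\<lambda>t. ps ! t) ` {..<r}" unfolding cw_img by (auto intro: image_cong)
  also have "\<dots> = set ps" using lps by (auto simp: set_conv_nth)
  finally show ?thesis .
qed

lemma winRmid: assumes "r \<le> k" "k \<le> m" shows "cyc_window (ps @ Q) r k = cyc_window Q r (k - r)"
proof -
  have "\<And>t. t < r \<Longrightarrow> (ps @ Q) ! ((k + t) mod length (ps @ Q)) = Q ! ((k - r + t) mod length Q)"
    using lR lps lQ rm assms by (simp add: nth_append)
  then show ?thesis unfolding cw_img by (auto intro: image_cong)
qed

lemma winR1: assumes "1 \<le> k" "k \<le> r - 1"
  shows "cyc_window (ps @ Q) r k = set (drop k ps) \<union> (\<lambda>t. Q!(t-1)) ` {1..k}"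
proof (rule set_eqI, rule iffI)
  fix e assume "e \<in> cyc_window (ps @ Q) r k"
  then obtain t where t: "t < r" "e = (ps @ Q) ! ((k + t) mod (r + m))" unfolding cw_img lR by auto
  have kt: "(k + t) mod (r + m) = k + t" using t assms rm by simp
  show "e \<in> set (drop k ps) \<union> (\<lambda>t. Q!(t-1)) ` {1..k}"
  proof (cases "k + t < r")
    case True
    then have "e = drop k ps ! t" using t kt lps by (simp add: nth_append)
    moreover have "t < length (drop k ps)" using True lps by simp
    ultimately show ?thesis by (metis UnI1 nth_mem)
  next
    case False
    then have "e = Q ! ((k + t - r + 1) - 1)" using t kt lps by (simp add: nth_append)
    moreover have "k + t - r + 1 \<in> {1..k}" using False t by auto
    ultimately have "e \<in> (\<lambda>t. Q!(t-1)) ` {1..k}" by (intro rev_image_eqI[of "k + t - r + 1"]) auto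
    then show ?thesis by blast
  qed
next
  fix e assume "e \<in> set (drop k ps) \<union> (\<lambda>t. Q!(t-1)) ` {1..k}"
  then consider u where "u < length (drop k ps)" "e = drop k ps ! u" | s where "s \<in> {1..k}" "e = Q!(s-1)"
    by (auto simp: in_set_conv_nth)
  then show "e \<in> cyc_window (ps @ Q) r k"
  proof cases
    case 1
    have "(k + u) mod (r + m) = k + u" "k + u < r" using 1 lps rm by auto
    then have "e = (ps @ Q) ! ((k + u) mod length (ps @ Q))" using 1 lR lps by (simp add: nth_append)
    moreover have "u < r" using 1 lps by auto
    ultimately show ?thesis unfolding cw_img by blast
  next
    case 2
    define t where "t = r - k + s - 1"
    have "t < r" "k + t < r + m" "\<not> k + t < r" "k + t - r = s - 1" using 2 assms rm unfolding t_def by auto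
    then have "e = (ps @ Q) ! ((k + t) mod length (ps @ Q))" using 2 lR lps by (simp add: nth_append)
    then show ?thesis unfolding cw_img using \<open>t < r\<close> by blast
  qed
qed

lemma winR2: assumes "m < k" "k < m + r"
  shows "cyc_window (ps @ Q) r k = (\<lambda>a. Q!(m-a)) ` {1..m+r-k} \<union> set (take (k - m) ps)"
proof (rule set_eqI, rule iffI)
  fix e assume "e \<in> cyc_window (ps @ Q) r k"
  then obtain t where t: "t < r" "e = (ps @ Q) ! ((k + t) mod (r + m))" unfolding cw_img lR by auto
  show "e \<in> (\<lambda>a. Q!(m-a)) ` {1..m+r-k} \<union> set (take (k - m) ps)"
  proof (cases "t < m + r - k")
    case True
    have kt: "(k + t) mod (r + m) = k + t" using True by simp
    have "e = Q ! (m - (m + r - k - t))" using t kt lps assms True rm by (simp add: nth_append)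
    moreover have "m + r - k - t \<in> {1..m+r-k}" using True by auto
    ultimately have "e \<in> (\<lambda>a. Q!(m-a)) ` {1..m+r-k}" by (intro rev_image_eqI[of "m + r - k - t"]) auto
    then show ?thesis by blast
  next
    case False
    have kt: "(k + t) mod (r + m) = t - (m + r - k)" using False t assms rm by (subst mod_high) auto
    have lt: "t + k - (m + r) < r" using t assms by auto
    have "e = take (k - m) ps ! (t - (m + r - k))" using t kt lps assms False lt by (simp add: nth_append)
    moreover have "t - (m + r - k) < length (take (k - m) ps)" using t lps assms False by auto
    ultimately show ?thesis by (metis UnI2 nth_mem)
  qed
next
  fix e assume "e \<in> (\<lambda>a. Q!(m-a)) ` {1..m+r-k} \<union> set (take (k - m) ps)"
  then consider a where "a \<in> {1..m+r-k}" "e = Q!(m-a)" | u where "u < length (take (k - m) ps)" "e = take (k - m) ps ! u"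
    by (auto simp: in_set_conv_nth)
  then show "e \<in> cyc_window (ps @ Q) r k"
  proof cases
    case 1
    define t where "t = m + r - k - a"
    have "t < r" "k + t < r + m" "\<not> k + t < r" "k + t - r = m - a" using 1 assms rm unfolding t_def by auto
    then have "e = (ps @ Q) ! ((k + t) mod length (ps @ Q))" using 1 lR lps by (simp add: nth_append)
    then show ?thesis unfolding cw_img using \<open>t < r\<close> by blast
  next
    case 2
    define t where "t = m + r - k + u"
    have "t < r" using 2 assms lps unfolding t_def by auto
    have "(k + t) mod (r + m) = u" using 2 assms lps rm unfolding t_def by (subst mod_high) auto
    moreover have "u < r" using 2 lps by auto
    ultimately have "e = (ps @ Q) ! ((k + t) mod length (ps @ Q))" using 2 lR lps by (simp add: nth_append)
    then show ?thesis unfolding cw_img using \<open>t < r\<close> by blast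
  qed
qed

end



lemma xQ_lemma: assumes "1 \<le> a" "a \<le> m" "1 \<le> j" "j \<le> m" "length es = m"
  shows "cyc_nth es (int j - int a) = rotate (j - 1) es ! (m - a)"
proof -
  have e1: "int ((m - a + (j - 1)) mod m) = (int j - int a - 1 + int m) mod int m"
    using assms by (simp add: of_nat_mod of_nat_diff algebra_simps)
  have e2: "(int j - int a - 1 + int m) mod int m = (int j - int a - 1) mod int m" by (rule mod_add_self2)
  have "nat ((int j - int a - 1) mod int m) = (m - a + (j - 1)) mod m" using e1 e2 by simp
  moreover have "rotate (j - 1) es ! (m - a) = es ! ((m - a + (j - 1)) mod m)"
    using assms by (simp add: nth_rotate add.commute)
  ultimately show ?thesis unfolding cyc_nth_def using assms by simp
qed

lemma yQ_lemma: assumes "1 \<le> t" "t \<le> m" "1 \<le> j" "j \<le> m" "length es = m"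
  shows "cyc_nth es (int j + int t - 1) = rotate (j - 1) es ! (t - 1)"
proof -
  have e1: "int ((t - 1 + (j - 1)) mod m) = (int j + int t - 1 - 1) mod int m"
    using assms by (simp add: of_nat_mod of_nat_diff algebra_simps)
  have "nat ((int j + int t - 1 - 1) mod int m) = (t - 1 + (j - 1)) mod m" using e1 by simp
  moreover have "rotate (j - 1) es ! (t - 1) = es ! ((t - 1 + (j - 1)) mod m)"
    using assms by (simp add: nth_rotate add.commute)
  ultimately show ?thesis unfolding cyc_nth_def using assms by simp
qed




lemma Spair_abs:
  assumes pav: "paving E indep" and rk: "mrank E indep = r" and r3: "r \<ge> 3"
    and bS: "basis E indep S" and cS: "card S = r"
    and injf: "inj_on f {1..r-1}" and fE: "f ` {1..r-1} \<subseteq> E - S"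
    and injg: "inj_on g {1..r-1}" and gE: "g ` {1..r-1} \<subseteq> E - S"
    and win: "\<And>k. k \<in> {1..r-1} \<Longrightarrow> indep (f ` {1..r-k} \<union> g ` {1..k}) \<and> card (f ` {1..r-k} \<union> g ` {1..k}) = r"
  shows "S_pair S (Hset E indep S r f) (Hset E indep S r g)"
proof -
  have mat: "matroid E indep" using pav unfolding paving_def by (rule conjunct1)
  have SE: "S \<subseteq> E" using bS unfolding basis_def by (rule conjunct1)
  have fS: "finite S" using finite_subset[OF SE m_finite[OF mat]] .
  have Sne: "S \<noteq> {}" using cS r3 by auto
  have P: "(\<forall>A\<in>F. \<forall>B\<in>F. B \<subset> A \<and> card A = card B + 1 \<longrightarrow>
            (\<forall>D. D \<subseteq> A \<and> card D = card B \<longrightarrow> D \<in> F))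
     \<and> (\<forall>A\<in>F. \<forall>B\<in>F. card A = card B \<and> card (A \<inter> B) = card A - 1 \<longrightarrow> A \<union> B \<in> F)
     \<and> \<not> (\<forall>s\<in>S. {s} \<in> F) \<and> S \<notin> F"
    if "F = Hset E indep S r h" "inj_on h {1..r-1}" "h ` {1..r-1} \<subseteq> E - S" for F h
    using H_S1[OF pav rk r3 bS cS that(2,3)] H_S2[OF pav rk r3 bS cS that(2,3)]
      H_S3[OF pav rk r3 bS cS that(2,3)] unfolding that(1) by blast
  show ?thesis unfolding S_pair_def
  proof (intro conjI)
    show "finite S" by (rule fS)
    show "S \<noteq> {}" by (rule Sne)
    show "Hset E indep S r f \<subseteq> Pow S" by (rule H_sub[OF pav rk r3 bS cS injf fE])
    show "Hset E indep S r g \<subseteq> Pow S" by (rule H_sub[OF pav rk r3 bS cS injg gE])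
    show "\<forall>F\<in>{Hset E indep S r f, Hset E indep S r g}.
       (\<forall>A\<in>F. \<forall>B\<in>F. B \<subset> A \<and> card A = card B + 1 \<longrightarrow>
            (\<forall>D. D \<subseteq> A \<and> card D = card B \<longrightarrow> D \<in> F))
     \<and> (\<forall>A\<in>F. \<forall>B\<in>F. card A = card B \<and> card (A \<inter> B) = card A - 1 \<longrightarrow> A \<union> B \<in> F)
     \<and> \<not> (\<forall>s\<in>S. {s} \<in> F) \<and> S \<notin> F"
    proof
      fix F assume "F \<in> {Hset E indep S r f, Hset E indep S r g}"
      then consider "F = Hset E indep S r f" | "F = Hset E indep S r g" by blast
      then show "(\<forall>A\<in>F. \<forall>B\<in>F. B \<subset> A \<and> card A = card B + 1 \<longrightarrow>
            (\<forall>D. D \<subseteq> A \<and> card D = card B \<longrightarrow> D \<in> F))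
     \<and> (\<forall>A\<in>F. \<forall>B\<in>F. card A = card B \<and> card (A \<inter> B) = card A - 1 \<longrightarrow> A \<union> B \<in> F)
     \<and> \<not> (\<forall>s\<in>S. {s} \<in> F) \<and> S \<notin> F"
      proof cases
        case 1 show ?thesis by (rule P[OF 1 injf fE])
      next
        case 2 show ?thesis by (rule P[OF 2 injg gE])
      qed
    qed
    show "\<forall>k\<in>{1..card S - 1}. \<forall>x\<in>S.
       (\<forall>D. D \<subseteq> S - {x} \<and> card D = k \<longrightarrow> D \<in> Hset E indep S r f) \<longrightarrow>
       \<not> (\<forall>D. D \<subseteq> S - {x} \<and> card D = card S - k \<longrightarrow> D \<in> Hset E indep S r g)"
      using S4_abs[OF pav rk r3 bS cS injf fE injg gE win] by blast
  qed
qed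




lemma OC_abs:
  assumes pav: "paving E indep" and rk: "mrank E indep = r" and r3: "r \<ge> 3"
    and bS: "basis E indep S" and cS: "card S = r"
    and injf: "inj_on f {1..r-1}" and fE: "f ` {1..r-1} \<subseteq> E - S"
    and injg: "inj_on g {1..r-1}" and gE: "g ` {1..r-1} \<subseteq> E - S"
    and dQ: "distinct Q" and sQ: "set Q = E - S" and lQ: "length Q = m" and rm: "r \<le> m"
    and aQ: "cyclic_arrangement E indep Q"
    and fQ: "\<And>a. a \<in> {1..r-1} \<Longrightarrow> f a = Q!(m-a)"
    and gQ: "\<And>t. t \<in> {1..r-1} \<Longrightarrow> g t = Q!(t-1)"
    and dps: "distinct ps" and sps: "set ps = S"
    and noi: "\<And>i. i \<in> {1..length ps} \<Longrightarrow> set (take i ps) \<notin> Hset E indep S r f \<and> set (drop (i-1) ps) \<notin> Hset E indep S r g"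
  shows "cyclic_ordering E indep (ps @ Q)"
proof -
  have mat: "matroid E indep" using pav unfolding paving_def by (rule conjunct1)
  have SE: "S \<subseteq> E" using bS unfolding basis_def by (rule conjunct1)
  have iS: "indep S" using bS unfolding basis_def by (elim conjE)
  have lps: "length ps = r" using distinct_card[OF dps] sps cS by simp
  have sR: "set (ps @ Q) = E" using sps sQ SE by auto
  have dR: "distinct (ps @ Q)" using dps dQ sps sQ by auto
  have lR: "length (ps @ Q) = r + m" using lps lQ by simp
  have Qbasis: "\<And>k. k < m \<Longrightarrow> basis E indep (cyc_window Q r k)"
    using aQ rk lQ unfolding cyclic_arrangement_def by auto
  have charf: "\<And>D. D \<in> Hset E indep S r f \<longleftrightarrow> D \<subseteq> S \<and> 1 \<le> card D \<and> card D \<le> r-1 \<and>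
            \<not> indep (f ` {1..r - card D} \<union> D)"
    by (rule Hset_char[OF pav rk SE injf fE])
  have charg: "\<And>D. D \<in> Hset E indep S r g \<longleftrightarrow> D \<subseteq> S \<and> 1 \<le> card D \<and> card D \<le> r-1 \<and>
            \<not> indep (g ` {1..r - card D} \<union> D)"
    by (rule Hset_char[OF pav rk SE injg gE])
  have win: "indep (cyc_window (ps @ Q) r k)" if k: "k < r + m" for k
  proof -
    consider "k = 0" | "1 \<le> k" "k \<le> r - 1" | "r \<le> k" "k \<le> m" | "m < k" "k < m + r"
      using k by linarith
    then show ?thesis
    proof cases
      case 1 then show ?thesis using winR0[OF lps lQ rm] sps iS by simp
    next
      case 2
      have fimg: "g ` {1..k} = (\<lambda>t. Q!(t-1)) ` {1..k}" using gQ 2 by (intro image_cong) auto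
      define D where "D = set (drop k ps)"
      have cD: "card D = r - k" unfolding D_def using dps lps by (simp add: distinct_card)
      have "k + 1 \<in> {1..length ps}" using 2 lps by auto
      then have "D \<notin> Hset E indep S r g" using noi[of "k+1"] unfolding D_def by simp
      moreover have "D \<subseteq> S" unfolding D_def using sps set_drop_subset by metis
      moreover have "r - card D = k" using cD 2 by auto
      ultimately have "indep (g ` {1..k} \<union> D)" using charg[of D] cD 2 by auto
      then show ?thesis using winR1[OF lps lQ rm 2] fimg unfolding D_def by (simp add: Un_commute)
    next
      case 3
      have "k - r < m" using 3 r3 by linarith
      then have "basis E indep (cyc_window Q r (k - r))" by (rule Qbasis)
      then show ?thesis using winRmid[OF lps lQ rm 3] unfolding basis_def by simp
    next
      case 4
      have fimg: "f ` {1..m+r-k} = (\<lambda>a. Q!(m-a)) ` {1..m+r-k}" using fQ 4 by (intro image_cong) auto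
      define D where "D = set (take (k - m) ps)"
      have cD: "card D = k - m" unfolding D_def using dps lps 4 by (simp add: distinct_card)
      have "k - m \<in> {1..length ps}" using 4 lps by auto
      then have "D \<notin> Hset E indep S r f" using noi unfolding D_def by blast
      moreover have "D \<subseteq> S" unfolding D_def using sps set_take_subset by metis
      moreover have "r - card D = m + r - k" using cD 4 by auto
      ultimately have "indep (f ` {1..m+r-k} \<union> D)" using charf[of D] cD 4 by auto
      then show ?thesis using winR2[OF lps lQ rm 4] fimg unfolding D_def by simp
    qed
  qed
  show ?thesis unfolding cyclic_ordering_def cyclic_arrangement_def
  proof (intro conjI allI impI)
    show "set (ps @ Q) = E" by (rule sR)
    show "distinct (ps @ Q)" by (rule dR)
    fix k assume k: "k < length (ps @ Q)"
    have "\<And>t. (ps@Q) ! ((k+t) mod length (ps@Q)) \<in> set (ps@Q)" using lR r3 by (intro nth_mem) simp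
    then have WE: "cyc_window (ps @ Q) r k \<subseteq> E" unfolding cw_img sR by blast
    have cW: "card (cyc_window (ps @ Q) r k) = r" using card_cw[OF dR] lR by simp
    show "basis E indep (cyc_window (ps @ Q) (mrank E indep) k)"
      unfolding rk using indep_basis[OF mat WE win] k lR cW rk by simp
  qed
qed




theorem mainTheorem10:
  fixes E :: "'a set" and indep :: "'a set \<Rightarrow> bool" and S :: "'a set"
    and es :: "'a list" and r j :: nat
  assumes "paving E indep"
    and "mrank E indep = r" and "r \<ge> 3"
    and "basis E indep S" and "card S = r"
    and "set es = E - S" and "length es \<ge> r"
    and "cyclic_arrangement E indep es"
    and "\<forall>i\<in>{1..length es}. \<forall>ps. distinct ps \<and> set ps = S \<longrightarrow>
            \<not> cyclic_ordering E indep (take i es @ ps @ drop i es)"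
    and "j \<in> {1..length es}"
  defines "x \<equiv> \<lambda>t::nat. cyc_nth es (int j - int t)"
    and "y \<equiv> \<lambda>t::nat. cyc_nth es (int j + int t - 1)"
  defines "H1 \<equiv> {C \<inter> S | C. circuit E indep C \<and> card C = r \<and>
              (\<exists>i\<in>{1..r-1}. x ` {1..i} \<subset> C \<and> C \<subseteq> x ` {1..i} \<union> S)}"
    and "H2 \<equiv> {C \<inter> S | C. circuit E indep C \<and> card C = r \<and>
              (\<exists>i\<in>{1..r-1}. y ` {1..i} \<subset> C \<and> C \<subseteq> y ` {1..i} \<union> S)}"
  shows "S_pair S H1 H2 \<and> order_consistent S H1 H2"
proof -
  note pav = assms(1) and rk = assms(2) and r3 = assms(3) and bS = assms(4) and cS = assms(5)
    and ses = assms(6) and rm0 = assms(7) and aes = assms(8) and hyp = assms(9) and jr = assms(10)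
  define m where "m = length es"
  have rm: "r \<le> m" using rm0 m_def by simp
  have j1: "1 \<le> j" "j \<le> m" using jr m_def by auto
  define Q where "Q = rotate (j - 1) es"
  have lQ: "length Q = m" unfolding Q_def m_def by simp
  have "distinct es" using aes unfolding cyclic_arrangement_def by (rule conjunct1)
  then have dQ: "distinct Q" unfolding Q_def by simp
  have sQ: "set Q = E - S" unfolding Q_def using ses by simp
  have aQ: "cyclic_arrangement E indep Q" unfolding Q_def by (rule arr_rotate[OF aes])
  have xQ: "x a = Q!(m-a)" if "a \<in> {1..r-1}" for a
  proof -
    have "1 \<le> a" "a \<le> m" using that rm by auto
    from xQ_lemma[OF this j1 m_def[symmetric]] show ?thesis unfolding x_def Q_def .
  qed
  have yQ: "y t = Q!(t-1)" if "t \<in> {1..r-1}" for t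
  proof -
    have "1 \<le> t" "t \<le> m" using that rm by auto
    from yQ_lemma[OF this j1 m_def[symmetric]] show ?thesis unfolding y_def Q_def .
  qed
  have injx: "inj_on x {1..r-1}"
  proof
    fix a b assume ab: "a \<in> {1..r-1}" "b \<in> {1..r-1}" "x a = x b"
    then have "Q!(m-a) = Q!(m-b)" using xQ by simp
    moreover have "m - a < length Q" "m - b < length Q" using ab lQ rm by auto
    ultimately have "m - a = m - b" using nth_eq_iff_index_eq[OF dQ] by blast
    then show "a = b" using ab rm by auto
  qed
  have injy: "inj_on y {1..r-1}"
  proof
    fix a b assume ab: "a \<in> {1..r-1}" "b \<in> {1..r-1}" "y a = y b"
    then have "Q!(a-1) = Q!(b-1)" using yQ by simp
    moreover have "a - 1 < length Q" "b - 1 < length Q" using ab lQ rm by auto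
    ultimately have "a - 1 = b - 1" using nth_eq_iff_index_eq[OF dQ] by blast
    then show "a = b" using ab by auto
  qed
  have xE: "x ` {1..r-1} \<subseteq> E - S"
  proof
    fix e assume "e \<in> x ` {1..r-1}"
    then obtain a where a: "a \<in> {1..r-1}" "e = x a" by auto
    then have "e = Q!(m-a)" using xQ by simp
    moreover have "m - a < length Q" using a lQ rm by auto
    ultimately show "e \<in> E - S" using sQ nth_mem by metis
  qed
  have yE: "y ` {1..r-1} \<subseteq> E - S"
  proof
    fix e assume "e \<in> y ` {1..r-1}"
    then obtain a where a: "a \<in> {1..r-1}" "e = y a" by auto
    then have "e = Q!(a-1)" using yQ by simp
    moreover have "a - 1 < length Q" using a lQ rm by auto
    ultimately show "e \<in> E - S" using sQ nth_mem by metis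
  qed
  have H1e: "H1 = Hset E indep S r x" unfolding H1_def Hset_def by simp
  have H2e: "H2 = Hset E indep S r y" unfolding H2_def Hset_def by simp
  have win: "indep (x ` {1..r-k} \<union> y ` {1..k}) \<and> card (x ` {1..r-k} \<union> y ` {1..k}) = r"
    if k: "k \<in> {1..r-1}" for k
  proof -
    have "x ` {1..r-k} = (\<lambda>a. Q!(m-a)) ` {1..r-k}" using xQ k by (intro image_cong) auto
    moreover have "y ` {1..k} = (\<lambda>t. Q!(t-1)) ` {1..k}" using yQ k by (intro image_cong) auto
    moreover have k1: "1 \<le> k" "k \<le> r - 1" using k by auto
    ultimately have eq: "x ` {1..r-k} \<union> y ` {1..k} = cyc_window Q r (m - r + k)"
      using winQ[OF lQ rm k1] by simp
    have "m - r + k < length Q" using k1 lQ rm by auto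
    then have "basis E indep (cyc_window Q r (m - r + k))"
      using aQ rk unfolding cyclic_arrangement_def by auto
    moreover have "card (cyc_window Q r (m - r + k)) = r" using card_cw[OF dQ] lQ rm by simp
    ultimately show ?thesis unfolding eq basis_def by simp
  qed
  have SP: "S_pair S H1 H2" unfolding H1e H2e
    by (rule Spair_abs[OF pav rk r3 bS cS injx xE injy yE win])
  have OC: "order_consistent S H1 H2" unfolding order_consistent_def
  proof (intro allI impI)
    fix ps assume ps: "distinct ps \<and> set ps = S"
    show "\<exists>i\<in>{1..length ps}. set (take i ps) \<in> H1 \<or> set (drop (i - 1) ps) \<in> H2"
    proof (rule ccontr)
      assume "\<not> ?thesis"
      then have noi: "\<And>i. i \<in> {1..length ps} \<Longrightarrow> set (take i ps) \<notin> Hset E indep S r x \<and> set (drop (i-1) ps) \<notin> Hset E indep S r y"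
        unfolding H1e H2e by blast
      have co: "cyclic_ordering E indep (ps @ Q)"
        by (rule OC_abs[OF pav rk r3 bS cS injx xE injy yE dQ sQ lQ rm aQ xQ yQ _ _ noi]) (use ps in auto)
      show False
      proof (cases "j = 1")
        case True
        have "Q = es" unfolding Q_def True by simp
        have "take m es @ ps @ drop m es = rotate (length ps) (ps @ es)" unfolding m_def
          by (simp add: rotate_append)
        then have "cyclic_ordering E indep (take m es @ ps @ drop m es)"
          using ord_rotate[OF co] \<open>Q = es\<close> by simp
        moreover have "m \<in> {1..length es}" using m_def rm r3 by auto
        ultimately show False using hyp ps m_def by blast
      next
        case False
        have jm: "(j - 1) mod length es = j - 1" using j1 m_def by simp
        have "Q = drop (j-1) es @ take (j-1) es" unfolding Q_def using jm by (simp add: rotate_drop_take)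
        then have "take (j-1) es @ ps @ drop (j-1) es = rotate (length (ps @ drop (j-1) es)) (ps @ Q)"
          using rotate_append[of "ps @ drop (j-1) es" "take (j-1) es"] by simp
        then have "cyclic_ordering E indep (take (j-1) es @ ps @ drop (j-1) es)"
          using ord_rotate[OF co] by simp
        moreover have "j - 1 \<in> {1..length es}" using False j1 m_def by auto
        ultimately show False using hyp ps by blast
      qed
    qed
  qed
  show ?thesis using SP OC by simp
qed


end
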